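(* Let $d \ge 1$ be an integer and let $\gamma, c_1, c_2 > 0$ be real numbers. There exists a constant $K$, depending only on $d, \gamma, c_1, c_2$, such that the following holds for every positive integer $N$: if $Q = N^\gamma$, $P \subseteq \mathcal{P}(Q)$ is a set of primes with $w(P) \ge c_1 \log Q$, and $S \subseteq [N]^d$ occupies fewer than $c_2$ residue classes modulo $p$ for every prime $p \in P$, then $|S| \le K$.
   Context: $[N] = \{0,1,\ldots,N\}$. $\mathcal{P}(Q)$ denotes the set of primes $p \le Q$, and for a finite set of primes $P$, $w(P) := \sum_{p \in P} \frac{\log p}{p}$. A set $S \subseteq \mathbb{Z}^d$ occupies $m$ residue classes mod $p$ if its image in $(\mathbb{Z}/p\mathbb{Z})^d$ has $m$ elements. *)

theory Defs
  imports Complex_Main "HOL-Computational_Algebra.Primes"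
begin

definition wP :: "nat set \<Rightarrow> real" where
  "wP P = (\<Sum>p\<in>P. ln (real p) / real p)"

definition box :: "nat \<Rightarrow> nat \<Rightarrow> int list set" where
  "box d N = {x. length x = d \<and> (\<forall>a\<in>set x. 0 \<le> a \<and> a \<le> int N)}"

definition res_classes :: "nat \<Rightarrow> int list set \<Rightarrow> nat" where
  "res_classes p S = card ((\<lambda>x. map (\<lambda>a. a mod int p) x) ` S)"

end

theory Submission imports Defs begin

lemma sum_UN_le_aux:
  fixes f :: "'b \<Rightarrow> real"
  assumes "finite I" "\<And>i. i \<in> I \<Longrightarrow> finite (A i)" "\<And>x. f x \<ge> 0"
  shows "sum f (\<Union>i\<in>I. A i) \<le> (\<Sum>i\<in>I. sum f (A i))"
  using assms
proof (induction I rule: finite_induct)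
  case empty then show ?case by simp
next
  case (insert j I)
  have fin: "finite (\<Union>i\<in>I. A i)" using insert by auto
  have "sum f (\<Union>i\<in>insert j I. A i) = sum f (A j \<union> (\<Union>i\<in>I. A i))" by simp
  also have "\<dots> = sum f (A j) + sum f (\<Union>i\<in>I. A i) - sum f (A j \<inter> (\<Union>i\<in>I. A i))"
    using sum_Un[OF insert.prems(1)[of j] fin, of f] by simp
  also have "\<dots> \<le> sum f (A j) + sum f (\<Union>i\<in>I. A i)"
    using sum_nonneg[of "A j \<inter> (\<Union>i\<in>I. A i)" f] insert.prems(2) by simp
  also have "\<dots> \<le> sum f (A j) + (\<Sum>i\<in>I. sum f (A i))"
    using insert by simp
  also have "\<dots> = (\<Sum>i\<in>insert j I. sum f (A i))" using insert by simp
  finally show ?case .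
qed

lemma prod_primes_dvd:
  fixes n :: nat
  assumes "finite A" "\<And>p. p \<in> A \<Longrightarrow> prime p \<and> p dvd n"
  shows "\<Prod>A dvd n"
  using assms
proof (induction A rule: finite_induct)
  case empty then show ?case by simp
next
  case (insert p B)
  have IH: "\<Prod>B dvd n" using insert by auto
  have pp: "prime p" "p dvd n" using insert.prems by auto
  have "\<not> p dvd \<Prod>B"
  proof
    assume "p dvd \<Prod>B"
    then obtain q where "q \<in> B" "p dvd q" using prime_dvd_prod_iff[OF insert.hyps(1) pp(1), of id] by auto
    moreover have "prime q" using insert.prems \<open>q \<in> B\<close> by auto
    ultimately have "p = q" using pp(1) by (simp add: primes_dvd_imp_eq)
    then show False using insert.hyps(2) \<open>q \<in> B\<close> by simp
  qed
  then have "coprime p (\<Prod>B)" using pp(1) prime_imp_coprime by blast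
  then have "p * \<Prod>B dvd n" using IH pp(2) divides_mult by blast
  then show ?case using insert.hyps by simp
qed

lemma weight_bound:
  fixes n Y :: nat
  assumes "finite A" "\<And>p. p \<in> A \<Longrightarrow> prime p \<and> p dvd n" "n > 0" "Y > 0"
  shows "wP A \<le> real Y + ln (real n) / real Y"
proof -
  define A1 where "A1 = {p\<in>A. p \<le> Y}"
  define A2 where "A2 = {p\<in>A. \<not> p \<le> Y}"
  have fin: "finite A1" "finite A2" using assms(1) by (auto simp: A1_def A2_def)
  have AU: "A = A1 \<union> A2" "A1 \<inter> A2 = {}" by (auto simp: A1_def A2_def)
  have split: "wP A = wP A1 + wP A2"
    unfolding wP_def by (subst AU(1), rule sum.union_disjoint[OF fin AU(2)])
  have pos: "\<And>p. p \<in> A \<Longrightarrow> p \<ge> 2" using assms(2) prime_ge_2_nat by blast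
  have "wP A1 \<le> (\<Sum>p\<in>A1. 1)"
    unfolding wP_def
  proof (rule sum_mono)
    fix p assume "p \<in> A1"
    then have "p \<ge> 2" using pos A1_def by auto
    then have "ln (real p) \<le> real p" using ln_le_minus_one[of "real p"] by simp
    then show "ln (real p) / real p \<le> 1" using \<open>p \<ge> 2\<close> by simp
  qed
  also have "\<dots> = real (card A1)" by simp
  also have "\<dots> \<le> real Y"
  proof -
    have "A1 \<subseteq> {..Y}" unfolding A1_def by auto
    then have "card A1 \<le> card {..Y}" by (rule card_mono[rotated]) simp
    moreover have "A1 \<subseteq> {1..Y}" unfolding A1_def using pos by force
    then have "card A1 \<le> card {1..Y}" by (rule card_mono[rotated]) simp
    ultimately show ?thesis by simp
  qed
  finally have b1: "wP A1 \<le> real Y" .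
  have "wP A2 \<le> (\<Sum>p\<in>A2. ln (real p) / real Y)"
    unfolding wP_def
  proof (rule sum_mono)
    fix p assume "p \<in> A2"
    then have "p > Y" "p \<ge> 2" using pos A2_def by auto
    moreover have "ln (real p) \<ge> 0" using \<open>p \<ge> 2\<close> by simp
    ultimately show "ln (real p) / real p \<le> ln (real p) / real Y"
      using assms(4) by (intro divide_left_mono) auto
  qed
  also have "\<dots> = (\<Sum>p\<in>A2. ln (real p)) / real Y" by (simp add: sum_divide_distrib)
  also have "(\<Sum>p\<in>A2. ln (real p)) = ln (real (\<Prod>A2))"
  proof -
    have "real (\<Prod>A2) = (\<Prod>p\<in>A2. real p)" by simp
    moreover have "ln (\<Prod>p\<in>A2. real p) = (\<Sum>p\<in>A2. ln (real p))"
      using fin(2) pos unfolding A2_def by (intro ln_prod) force+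
    ultimately show ?thesis by simp
  qed
  also have "ln (real (\<Prod>A2)) \<le> ln (real n)"
  proof -
    have "\<Prod>A2 dvd n" using fin(2) assms(2) by (intro prod_primes_dvd) (auto simp: A2_def)
    then have "\<Prod>A2 \<le> n" using assms(3) by (simp add: dvd_imp_le)
    moreover have "\<Prod>A2 > 0" using pos A2_def by (metis (no_types, lifting) dvd_0_left_iff \<open>\<Prod>A2 dvd n\<close> assms(3) gr0I less_not_refl2)
    ultimately show ?thesis
      by (metis ln_le_cancel_iff of_nat_0_less_iff of_nat_le_iff order_less_le_trans)
  qed
  finally have b2: "wP A2 \<le> ln (real n) / real Y" using assms(4) by (simp add: divide_right_mono)
  show ?thesis using split b1 b2 by simp
qed

theorem lemma3p2:
  fixes d :: nat and \<gamma> c1 c2 :: real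
  assumes "d \<ge> 1" and "\<gamma> > 0" and "c1 > 0" and "c2 > 0"
  shows "\<exists>K::real. \<forall>(N::nat) (Q::real) (P::nat set) (S::int list set).
           N > 0 \<longrightarrow> Q = real N powr \<gamma> \<longrightarrow>
           (\<forall>p\<in>P. prime p \<and> real p \<le> Q) \<longrightarrow>
           wP P \<ge> c1 * ln Q \<longrightarrow>
           S \<subseteq> box d N \<longrightarrow>
           (\<forall>p\<in>P. real (res_classes p S) < c2) \<longrightarrow>
           real (card S) \<le> K"
proof -
  define k where "k = nat \<lceil>c2\<rceil>"
  have k1: "k \<ge> 1" and kc: "c2 \<le> real k" using assms(4) unfolding k_def by linarith+
  define a where "a = c1 * \<gamma>"
  have apos: "a > 0" using assms unfolding a_def by simp
  define Y :: nat where "Y = nat \<lceil>2 * real k ^ 2 / a\<rceil> + 1"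
  have Y0: "Y > 0" and Yb: "2 * real k ^ 2 / a \<le> real Y" unfolding Y_def by linarith+
  define B where "B = 2 * real k ^ 2 * real Y / a"
  define K where "K = max (real k) ((exp B + 1) ^ d)"
  show ?thesis
  proof (intro exI[of _ K] allI impI)
    fix N :: nat and Q :: real and P :: "nat set" and S :: "int list set"
    assume N0: "N > 0" and Qd: "Q = real N powr \<gamma>"
      and Pp: "\<forall>p\<in>P. prime p \<and> real p \<le> Q" and wPQ: "wP P \<ge> c1 * ln Q"
      and Sb: "S \<subseteq> box d N" and Sr: "\<forall>p\<in>P. real (res_classes p S) < c2"
    show "real (card S) \<le> K"
    proof (cases "card S < k")
      case True then show ?thesis unfolding K_def by simp
    next
      case False
      then have kS: "k \<le> card S" by simp
      then have finS: "finite S" using k1 card.infinite by fastforce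
      obtain T where TS: "T \<subseteq> S" and cT: "card T = k" and finT: "finite T"
        using obtain_subset_with_card_n[OF kS] by blast
      have finP: "finite P"
      proof (rule finite_subset)
        show "P \<subseteq> {..nat \<lceil>Q\<rceil>}"
        proof
          fix p assume "p \<in> P"
          then have "real p \<le> Q" using Pp by auto
          then show "p \<in> {..nat \<lceil>Q\<rceil>}" by (simp add: le_nat_iff le_ceiling_iff)
        qed
      qed simp
      define f where "f = (\<lambda>(p::nat) (x::int list). map (\<lambda>a. a mod int p) x)"
      define Pairs where "Pairs = {(s,t). s \<in> T \<and> t \<in> T \<and> s \<noteq> t}"
      have finPairs: "finite Pairs" 
        by (rule finite_subset[of _ "T \<times> T"]) (auto simp: Pairs_def finT)
      have cPairs: "card Pairs \<le> k * k"
      proof -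
        have "card Pairs \<le> card (T \<times> T)"
          by (rule card_mono) (auto simp: Pairs_def finT)
        then show ?thesis using cT by (simp add: card_cartesian_product)
      qed
      define Pst where "Pst = (\<lambda>x. {p\<in>P. f p (fst x) = f p (snd x)})"
      have cover: "P \<subseteq> (\<Union>x\<in>Pairs. Pst x)"
      proof
        fix p assume pP: "p \<in> P"
        have "card (f p ` T) \<le> card (f p ` S)"
          using TS finS by (intro card_mono) auto
        also have "card (f p ` S) = res_classes p S" unfolding res_classes_def f_def by simp
        finally have "real (card (f p ` T)) < real k" using Sr pP kc
          by (metis (no_types, lifting) of_nat_le_iff order_le_less_trans order_less_le_trans)
        then have "card (f p ` T) < card T" using cT by simp
        then have "\<not> inj_on (f p) T" using card_image by fastforce
        then obtain s t where "s \<in> T" "t \<in> T" "s \<noteq> t" "f p s = f p t"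
          unfolding inj_on_def by blast
        then show "p \<in> (\<Union>x\<in>Pairs. Pst x)"
          using pP unfolding Pairs_def Pst_def by (intro UN_I[of "(s,t)"]) auto
      qed
      have each: "wP (Pst x) \<le> real Y + ln (real N) / real Y" if xP: "x \<in> Pairs" for x
      proof -
        obtain s t where x: "x = (s,t)" and st: "s \<in> T" "t \<in> T" "s \<noteq> t"
          using xP unfolding Pairs_def by auto
        have sb: "s \<in> box d N" "t \<in> box d N" using st TS Sb by auto
        then have len: "length s = d" "length t = d" unfolding box_def by auto
        obtain i where i: "i < d" "s ! i \<noteq> t ! i"
          using st(3) len nth_equalityI by metis
        have si: "0 \<le> s ! i" "s ! i \<le> int N" "0 \<le> t ! i" "t ! i \<le> int N"
          using sb i len nth_mem[of i s] nth_mem[of i t] unfolding box_def by auto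
        define n where "n = nat \<bar>s ! i - t ! i\<bar>"
        have n0: "n > 0" using i(2) unfolding n_def by simp
        have nN: "n \<le> N" using si unfolding n_def by simp
        have "wP (Pst x) \<le> real Y + ln (real n) / real Y"
        proof (rule weight_bound[OF _ _ n0 Y0])
          show "finite (Pst x)" using finP unfolding Pst_def by simp
        next
          fix p assume "p \<in> Pst x"
          then have pP: "p \<in> P" and eq: "f p s = f p t" unfolding Pst_def x by auto
          have "s ! i mod int p = t ! i mod int p"
            using arg_cong[OF eq, of "\<lambda>l. l ! i"] i len unfolding f_def by simp
          then have "int p dvd s ! i - t ! i" by (simp add: mod_eq_dvd_iff)
          then have "int p dvd int n" unfolding n_def by simp
          then have "p dvd n" by (simp add: int_dvd_int_iff)
          then show "prime p \<and> p dvd n" using pP Pp by auto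
        qed
        also have "\<dots> \<le> real Y + ln (real N) / real Y"
          using n0 nN Y0 by (intro add_left_mono divide_right_mono) auto
        finally show ?thesis .
      qed
      have nonneg: "\<And>p::nat. 0 \<le> ln (real p) / real p" by (case_tac "p = 0") auto
      have "wP P \<le> wP (\<Union>x\<in>Pairs. Pst x)"
        unfolding wP_def using cover finPairs finP
        by (intro sum_mono2) (auto simp: Pst_def)
      also have "\<dots> \<le> (\<Sum>x\<in>Pairs. wP (Pst x))"
        unfolding wP_def using finPairs finP
        by (intro sum_UN_le_aux) (auto simp: Pst_def nonneg)
      also have "\<dots> \<le> (\<Sum>x\<in>Pairs. real Y + ln (real N) / real Y)"
        using each by (intro sum_mono) auto
      also have "\<dots> = real (card Pairs) * (real Y + ln (real N) / real Y)" by simp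
      also have "\<dots> \<le> real (k * k) * (real Y + ln (real N) / real Y)"
      proof (rule mult_right_mono)
        show "real (card Pairs) \<le> real (k * k)" using cPairs by (simp only: of_nat_le_iff)
        show "0 \<le> real Y + ln (real N) / real Y" using N0 by simp
      qed
      finally have up: "wP P \<le> real k ^ 2 * real Y + (real k ^ 2 / real Y) * ln (real N)"
        using Y0 by (simp add: power2_eq_square algebra_simps)
      define L where "L = ln (real N)"
      have L0: "L \<ge> 0" using N0 unfolding L_def by simp
      have lnQ: "ln Q = \<gamma> * L" unfolding Qd L_def using N0 by (simp add: ln_powr)
      have low: "a * L \<le> wP P" using wPQ lnQ unfolding a_def by (simp add: mult.assoc)
      have kY: "real k ^ 2 / real Y \<le> a / 2" using Yb apos Y0
        by (simp add: field_simps)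
      have "(real k ^ 2 / real Y) * L \<le> (a / 2) * L" using kY L0 by (rule mult_right_mono)
      moreover have "a * L \<le> real k ^ 2 * real Y + (real k ^ 2 / real Y) * L"
        using up low unfolding L_def by linarith
      ultimately have "a * L / 2 \<le> real k ^ 2 * real Y" by linarith
      then have LB: "L \<le> B" unfolding B_def using apos by (simp add: field_simps)
      have NB: "real N \<le> exp B"
      proof -
        have "real N = exp L" unfolding L_def using N0 by simp
        also have "\<dots> \<le> exp B" using LB by simp
        finally show ?thesis .
      qed
      have boxeq: "box d N = {xs. set xs \<subseteq> {0..int N} \<and> length xs = d}"
        unfolding box_def by auto
      have cN: "card {0..int N} = N + 1" by (simp add: nat_add_distrib)
      have "card S \<le> card (box d N)"
        using Sb by (intro card_mono) (auto simp: boxeq finite_lists_length_eq)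
      also have "card (box d N) = (N + 1) ^ d"
        unfolding boxeq card_lists_length_eq[OF finite_atLeastAtMost_int]
        using cN by simp
      finally have "real (card S) \<le> (real N + 1) ^ d"
        by (metis of_nat_1 of_nat_add of_nat_le_iff of_nat_power)
      also have "\<dots> \<le> (exp B + 1) ^ d" using NB by (intro power_mono) auto
      finally show ?thesis unfolding K_def by simp
    qed
  qed
qed

end
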